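(* Let $\Gamma$ be a metrized graph that is a tree with $v \geq 5$ vertices, and let $k$ be an integer with $1 \leq k \leq v-4$. Then $$W(\Gamma)= \frac{(v-4-k)!}{(v-4)!}\sum_{e_{i_1} \in E(\Gamma)} \sum_{e_{i_2} \in E(\overline{\Gamma}_{i_1})}\cdots\sum_{e_{i_k} \in E(\overline{\Gamma}_{i_1, \dots, i_{k-1}})} W(\overline{\Gamma}_{i_1,\dots, i_k}) -\frac{\big(v^2-(k+2)v+k-1 \big)k}{(v-k-2)(v-k-3) }\,\ell(\Gamma).$$ In particular, for $k=v-4$, $$W(\Gamma)= \frac{1}{(v-4)!}\sum_{e_{i_1} \in E(\Gamma)}\cdots\sum_{e_{i_{v-4}} \in E(\overline{\Gamma}_{i_1, \dots, i_{v-5}})} W(\overline{\Gamma}_{i_1,\dots, i_{v-4}}) -\frac{(3v-5)(v-4)}{2}\,\ell(\Gamma).$$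
   Context: A metrized graph is a finite connected graph each of whose edges is identified with a closed segment of positive length; its vertex set $V(\Gamma)$ is a finite nonempty set containing every point of valence $\neq 2$, $v=\#V(\Gamma)$, and $E(\Gamma)$ is its edge set. $\ell(\Gamma)$ is the total length. The Wiener index is $W(\Gamma)=\frac12\sum_{p,q\in V(\Gamma)}d(p,q)$ with $d$ the path distance. $\overline\Gamma_{i_1,\dots,i_k}$ is the tree obtained by successively contracting to a point the edge $e_{i_1}\in E(\Gamma)$, then $e_{i_2}\in E(\overline\Gamma_{i_1})$, and so on, with vertex sets the images of $V(\Gamma)$; the sums run over all such ordered choices of edges. *)

theory Defs
  imports Main "HOL.Real"
begin

text \<open>A metrized graph, modelled combinatorially: a finite vertex set, a finite set of
edge labels, each edge having a pair of endpoints and a positive length.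
(Multiple edges and loops are allowed by the data structure.)\<close>

record ('a, 'e) mgraph =
  verts :: "'a set"
  edges :: "'e set"
  ends  :: "'e \<Rightarrow> 'a \<times> 'a"
  len   :: "'e \<Rightarrow> real"

definition wf_mgraph :: "('a, 'e) mgraph \<Rightarrow> bool" where
  "wf_mgraph G \<longleftrightarrow> finite (verts G) \<and> verts G \<noteq> {} \<and> finite (edges G) \<and>
     (\<forall>e\<in>edges G. fst (ends G e) \<in> verts G \<and> snd (ends G e) \<in> verts G \<and> len G e > 0)"

inductive walk :: "('a, 'e) mgraph \<Rightarrow> 'a \<Rightarrow> 'e list \<Rightarrow> 'a \<Rightarrow> bool" for G where
  walk_Nil: "p \<in> verts G \<Longrightarrow> walk G p [] p"
| walk_Cons1: "e \<in> edges G \<Longrightarrow> ends G e = (p, r) \<Longrightarrow> walk G r es q \<Longrightarrow> walk G p (e # es) q"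
| walk_Cons2: "e \<in> edges G \<Longrightarrow> ends G e = (r, p) \<Longrightarrow> walk G r es q \<Longrightarrow> walk G p (e # es) q"

definition connected_mg :: "('a, 'e) mgraph \<Rightarrow> bool" where
  "connected_mg G \<longleftrightarrow> (\<forall>p\<in>verts G. \<forall>q\<in>verts G. \<exists>es. walk G p es q)"

text \<open>Acyclic: no nonempty closed walk using pairwise distinct edges (this excludes loops and
multiple edges as well as longer cycles).\<close>

definition acyclic_mg :: "('a, 'e) mgraph \<Rightarrow> bool" where
  "acyclic_mg G \<longleftrightarrow> \<not> (\<exists>p es. es \<noteq> [] \<and> distinct es \<and> walk G p es p)"

definition is_metrized_tree :: "('a, 'e) mgraph \<Rightarrow> bool" where
  "is_metrized_tree G \<longleftrightarrow> wf_mgraph G \<and> connected_mg G \<and> acyclic_mg G"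

definition mdist :: "('a, 'e) mgraph \<Rightarrow> 'a \<Rightarrow> 'a \<Rightarrow> real" where
  "mdist G p q = Inf {sum_list (map (len G) es) | es. walk G p es q}"

definition wiener :: "('a, 'e) mgraph \<Rightarrow> real" where
  "wiener G = (1/2) * (\<Sum>p\<in>verts G. \<Sum>q\<in>verts G. mdist G p q)"

definition total_length :: "('a, 'e) mgraph \<Rightarrow> real" where
  "total_length G = (\<Sum>e\<in>edges G. len G e)"

definition contract :: "('a, 'e) mgraph \<Rightarrow> 'e \<Rightarrow> ('a, 'e) mgraph" where
  "contract G e =
     (let a = fst (ends G e); b = snd (ends G e); f = (\<lambda>x. if x = b then a else x) in
      \<lparr> verts = f ` verts G, edges = edges G - {e},
        ends = (\<lambda>d. map_prod f f (ends G d)), len = len G \<rparr>)"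

fun iter_wiener_sum :: "nat \<Rightarrow> ('a, 'e) mgraph \<Rightarrow> real" where
  "iter_wiener_sum 0 G = wiener G"
| "iter_wiener_sum (Suc k) G = (\<Sum>e\<in>edges G. iter_wiener_sum k (contract G e))"

end

theory Submission
  imports Defs
begin

lemma walk_last_in: "walk G p es q \<Longrightarrow> q \<in> verts G"
  by (induction rule: walk.induct) auto

lemma wf_ends: "wf_mgraph G \<Longrightarrow> e \<in> edges G \<Longrightarrow> ends G e = (x, y) \<Longrightarrow> x \<in> verts G \<and> y \<in> verts G"
  unfolding wf_mgraph_def by (metis fst_conv snd_conv)

lemma walk_first_in: "wf_mgraph G \<Longrightarrow> walk G p es q \<Longrightarrow> p \<in> verts G"
  by (erule walk.cases) (auto dest: wf_ends)

lemma walk_edges: "walk G p es q \<Longrightarrow> set es \<subseteq> edges G"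
  by (induction rule: walk.induct) auto

lemma walk_Nil_iff: "walk G p [] q \<longleftrightarrow> p = q \<and> p \<in> verts G"
  by (auto elim: walk.cases intro: walk.intros)

lemma walk_append_intro: "walk G p xs r \<Longrightarrow> walk G r ys q \<Longrightarrow> walk G p (xs @ ys) q"
  by (induction rule: walk.induct) (auto intro: walk.intros)

lemma walk_append_elim:
  assumes "wf_mgraph G" shows "walk G p (xs @ ys) q \<Longrightarrow> \<exists>r. walk G p xs r \<and> walk G r ys q"
proof (induction xs arbitrary: p)
  case Nil
  then have "p \<in> verts G" using walk_first_in[OF assms] by auto
  then show ?case using Nil by (auto intro: walk.intros)
next
  case (Cons x xs)
  from Cons.prems have "\<exists>r. (ends G x = (p,r) \<or> ends G x = (r,p)) \<and> x \<in> edges G \<and> walk G r (xs@ys) q"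
    by (auto elim: walk.cases)
  then obtain r where h: "ends G x = (p,r) \<or> ends G x = (r,p)" "x \<in> edges G" "walk G r (xs@ys) q" by blast
  with Cons.IH obtain s where "walk G r xs s" "walk G s ys q" by blast
  then show ?case using h by (auto intro: walk.intros)
qed

lemma walk_single:
  assumes "wf_mgraph G" "e \<in> edges G" "ends G e = (x, y)"
  shows "walk G x [e] y" "walk G y [e] x"
proof -
  have "x \<in> verts G" "y \<in> verts G" using assms wf_ends by metis+
  then show "walk G x [e] y" "walk G y [e] x" using assms by (auto intro: walk.intros)
qed

lemma walk_rev: assumes "wf_mgraph G" shows "walk G p es q \<Longrightarrow> walk G q (rev es) p"
proof (induction rule: walk.induct)
  case (walk_Nil p) then show ?case by (auto intro: walk.intros)
next
  case (walk_Cons1 e p r es q)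
  then have "walk G r [e] p" using walk_single[OF assms] by auto
  then show ?case using walk_Cons1 walk_append_intro by fastforce
next
  case (walk_Cons2 e r p es q)
  then have "walk G r [e] p" using walk_single[OF assms] by auto
  then show ?case using walk_Cons2 walk_append_intro by fastforce
qed

lemma walk_trail:
  assumes "wf_mgraph G"
  shows "walk G p es q \<Longrightarrow> \<exists>es'. walk G p es' q \<and> distinct es' \<and> set es' \<subseteq> set es"
proof (induction "length es" arbitrary: es rule: less_induct)
  case less
  show ?case
  proof (cases "distinct es")
    case True then show ?thesis using less.prems by auto
  next
    case False
    then obtain xs ys zs y where es: "es = xs @ [y] @ ys @ [y] @ zs" using not_distinct_decomp by blast
    from less.prems es obtain r1 where w1: "walk G p xs r1" and w2: "walk G r1 ([y] @ ys @ [y] @ zs) q"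
      using walk_append_elim[OF assms] by blast
    from w2 obtain r2 where w3: "walk G r1 [y] r2" and w4: "walk G r2 (ys @ [y] @ zs) q"
      using walk_append_elim[OF assms] by blast
    from w4 obtain r3 where w5: "walk G r2 ys r3" and w6: "walk G r3 ([y] @ zs) q"
      using walk_append_elim[OF assms] by blast
    from w6 obtain r4 where w7: "walk G r3 [y] r4" and w8: "walk G r4 zs q"
      using walk_append_elim[OF assms] by blast
    have e3: "ends G y = (r1, r2) \<or> ends G y = (r2, r1)"
      using w3 by (auto elim!: walk.cases)
    have e7: "ends G y = (r3, r4) \<or> ends G y = (r4, r3)"
      using w7 by (auto elim!: walk.cases)
    have "r4 = r1 \<or> r4 = r2" using e3 e7 by auto
    then obtain es2 where w: "walk G p es2 q" and sub: "set es2 \<subseteq> set es" and len: "length es2 < length es"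
    proof
      assume "r4 = r1"
      then have "walk G p (xs @ zs) q" using w1 w8 walk_append_intro by metis
      then show ?thesis using that[of "xs @ zs"] es by auto
    next
      assume "r4 = r2"
      then have "walk G p (xs @ [y] @ zs) q" using w1 w3 w8 walk_append_intro by metis
      then show ?thesis using that[of "xs @ [y] @ zs"] es by auto
    qed
    then show ?thesis using less.hyps[OF len w] sub by blast
  qed
qed

definition reach :: "('a, 'e) mgraph \<Rightarrow> 'e \<Rightarrow> 'a \<Rightarrow> 'a \<Rightarrow> bool" where
  "reach G e p q \<longleftrightarrow> (\<exists>ws. walk G p ws q \<and> e \<notin> set ws)"

lemma reach_refl: "p \<in> verts G \<Longrightarrow> reach G e p p"
  unfolding reach_def by (auto intro: walk.intros)

lemma reach_sym: "wf_mgraph G \<Longrightarrow> reach G e p q \<Longrightarrow> reach G e q p"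
  unfolding reach_def using walk_rev by fastforce

lemma reach_trans: "reach G e p q \<Longrightarrow> reach G e q r \<Longrightarrow> reach G e p r"
  unfolding reach_def using walk_append_intro by fastforce

lemma reach_edge: "wf_mgraph G \<Longrightarrow> d \<in> edges G \<Longrightarrow> d \<noteq> e \<Longrightarrow> ends G d = (x,y) \<Longrightarrow> reach G e x y"
  unfolding reach_def using walk_single by fastforce

lemma acyclic_bridge:
  assumes wf: "wf_mgraph G"
  shows "acyclic_mg G \<longleftrightarrow> (\<forall>d\<in>edges G. \<not> reach G d (fst (ends G d)) (snd (ends G d)))"
proof
  assume ac: "acyclic_mg G"
  show "\<forall>d\<in>edges G. \<not> reach G d (fst (ends G d)) (snd (ends G d))"
  proof (intro ballI notI)
    fix d assume d: "d \<in> edges G" and r: "reach G d (fst (ends G d)) (snd (ends G d))"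
    obtain x y where xy: "ends G d = (x,y)" by (cases "ends G d")
    from r xy obtain ws where "walk G x ws y" "d \<notin> set ws" unfolding reach_def by auto
    then obtain es where es: "walk G x es y" "distinct es" "d \<notin> set es" using walk_trail[OF wf] by blast
    have "walk G y [d] x" using walk_single[OF wf d xy] by auto
    then have "walk G x (es @ [d]) x" using es walk_append_intro by metis
    moreover have "distinct (es @ [d])" using es by auto
    ultimately show False using ac unfolding acyclic_mg_def by blast
  qed
next
  assume br: "\<forall>d\<in>edges G. \<not> reach G d (fst (ends G d)) (snd (ends G d))"
  show "acyclic_mg G" unfolding acyclic_mg_def
  proof
    assume "\<exists>p es. es \<noteq> [] \<and> distinct es \<and> walk G p es p"
    then obtain p d rest where w: "walk G p (d # rest) p" and dis: "distinct (d # rest)"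
      by (metis list.exhaust)
    from w have "\<exists>r. (ends G d = (p,r) \<or> ends G d = (r,p)) \<and> d \<in> edges G \<and> walk G r rest p"
      by (auto elim: walk.cases)
    then obtain r where h: "ends G d = (p,r) \<or> ends G d = (r,p)" "d \<in> edges G" "walk G r rest p" by blast
    have "reach G d r p" using h dis unfolding reach_def by auto
    then have "reach G d p r" using reach_sym[OF wf] by blast
    then show False using h br \<open>reach G d r p\<close> by (metis fst_conv snd_conv)
  qed
qed

lemma tree_wf: "is_metrized_tree G \<Longrightarrow> wf_mgraph G"
  unfolding is_metrized_tree_def by auto

lemma tree_bridge: "is_metrized_tree G \<Longrightarrow> d \<in> edges G \<Longrightarrow> ends G d = (x,y) \<Longrightarrow> \<not> reach G d x y"
  unfolding is_metrized_tree_def using acyclic_bridge by (metis fst_conv snd_conv)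

lemma tree_noloop: "is_metrized_tree G \<Longrightarrow> d \<in> edges G \<Longrightarrow> ends G d = (x,y) \<Longrightarrow> x \<noteq> y"
  using tree_bridge reach_refl by (metis tree_wf wf_ends)

lemma tree_conn: "is_metrized_tree G \<Longrightarrow> p \<in> verts G \<Longrightarrow> q \<in> verts G \<Longrightarrow> \<exists>es. walk G p es q"
  unfolding is_metrized_tree_def connected_mg_def by auto

lemma walk_through:
  assumes wf: "wf_mgraph G" and e: "ends G e = (a,b)"
  shows "walk G p ws q \<Longrightarrow> e \<in> set ws \<Longrightarrow> reach G e p a \<or> reach G e p b"
proof (induction rule: walk.induct)
  case (walk_Nil p) then show ?case by simp
next
  case (walk_Cons1 d p r es q)
  show ?case
  proof (cases "d = e")
    case True then show ?thesis using walk_Cons1 e reach_refl walk_first_in[OF wf] by (metis Pair_inject walk.walk_Cons1)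
  next
    case False
    then have "reach G e p r" using reach_edge[OF wf walk_Cons1(1) False walk_Cons1(2)] by auto
    then show ?thesis using walk_Cons1 False reach_trans by fastforce
  qed
next
  case (walk_Cons2 d r p es q)
  show ?case
  proof (cases "d = e")
    case True then show ?thesis using walk_Cons2 e reach_refl walk_first_in[OF wf] by (metis Pair_inject walk.walk_Cons2)
  next
    case False
    then have "reach G e r p" using reach_edge[OF wf walk_Cons2(1) False walk_Cons2(2)] by auto
    then have "reach G e p r" using reach_sym[OF wf] by blast
    then show ?thesis using walk_Cons2 False reach_trans by fastforce
  qed
qed

definition side :: "('a, 'e) mgraph \<Rightarrow> 'e \<Rightarrow> 'a \<Rightarrow> 'a set" where
  "side G e x = {p \<in> verts G. reach G e p x}"

lemma tree_cover:
  assumes T: "is_metrized_tree G" and e: "e \<in> edges G" "ends G e = (a,b)" and p: "p \<in> verts G"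
  shows "reach G e p a \<or> reach G e p b"
proof -
  have wf: "wf_mgraph G" using T tree_wf by auto
  have "a \<in> verts G" using wf_ends[OF wf e] by auto
  then obtain ws where w: "walk G p ws a" using tree_conn[OF T p] by blast
  show ?thesis
  proof (cases "e \<in> set ws")
    case True then show ?thesis using walk_through[OF wf e(2) w] by auto
  next
    case False then show ?thesis using w unfolding reach_def by auto
  qed
qed

lemma tree_reach_iff:
  assumes T: "is_metrized_tree G" and e: "e \<in> edges G" "ends G e = (a,b)"
    and p: "p \<in> verts G" and q: "q \<in> verts G"
  shows "reach G e p q \<longleftrightarrow> (p \<in> side G e a \<and> q \<in> side G e a) \<or> (p \<in> side G e b \<and> q \<in> side G e b)"
proof -
  have wf: "wf_mgraph G" using T tree_wf by auto
  have nab: "\<not> reach G e a b" using tree_bridge[OF T e] .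
  have cp: "reach G e p a \<or> reach G e p b" and cq: "reach G e q a \<or> reach G e q b"
    using tree_cover[OF T e] p q by auto
  have sy: "\<And>x y. reach G e x y \<Longrightarrow> reach G e y x" using reach_sym[OF wf] by blast
  show ?thesis
  proof
    assume r: "reach G e p q"
    show "(p \<in> side G e a \<and> q \<in> side G e a) \<or> (p \<in> side G e b \<and> q \<in> side G e b)"
    proof (cases "reach G e p a")
      case True
      have "reach G e q a" using reach_trans[OF sy[OF r] True] by simp
      then show ?thesis using True p q unfolding side_def by auto
    next
      case False
      then have pb: "reach G e p b" using cp by auto
      have "reach G e q b" using reach_trans[OF sy[OF r] pb] by simp
      then show ?thesis using pb p q unfolding side_def by auto
    qed
  next
    assume "(p \<in> side G e a \<and> q \<in> side G e a) \<or> (p \<in> side G e b \<and> q \<in> side G e b)"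
    then show "reach G e p q" unfolding side_def
    proof
      assume "p \<in> {p \<in> verts G. reach G e p a} \<and> q \<in> {p \<in> verts G. reach G e p a}"
      then have "reach G e p a" "reach G e q a" by auto
      then show ?thesis using reach_trans[OF _ sy] by metis
    next
      assume "p \<in> {p \<in> verts G. reach G e p b} \<and> q \<in> {p \<in> verts G. reach G e p b}"
      then have "reach G e p b" "reach G e q b" by auto
      then show ?thesis using reach_trans[OF _ sy] by metis
    qed
  qed
qed

lemma side_disj:
  assumes T: "is_metrized_tree G" and e: "e \<in> edges G" "ends G e = (a,b)"
  shows "side G e a \<inter> side G e b = {}" "side G e a \<union> side G e b = verts G"
proof -
  have wf: "wf_mgraph G" using T tree_wf by auto
  have nab: "\<not> reach G e a b" using tree_bridge[OF T e] .
  have sy: "\<And>x y. reach G e x y \<Longrightarrow> reach G e y x" using reach_sym[OF wf] by blast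
  show "side G e a \<inter> side G e b = {}" unfolding side_def
  proof (rule ccontr)
    assume "{p \<in> verts G. reach G e p a} \<inter> {p \<in> verts G. reach G e p b} \<noteq> {}"
    then obtain p where "reach G e p a" "reach G e p b" by auto
    then have "reach G e a b" using reach_trans[OF sy] by metis
    then show False using nab by simp
  qed
  show "side G e a \<union> side G e b = verts G" unfolding side_def using tree_cover[OF T e] by auto
qed

lemma sum_set_le_sum_list:
  fixes f :: "'b \<Rightarrow> real"
  assumes "\<And>x. x \<in> set xs \<Longrightarrow> f x \<ge> 0"
  shows "sum f (set xs) \<le> sum_list (map f xs)"
  using assms
proof (induction xs)
  case Nil then show ?case by simp
next
  case (Cons x xs)
  have "sum f (set (x # xs)) \<le> f x + sum f (set xs)"
    using Cons.prems by (simp add: sum.insert_if)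
  also have "\<dots> \<le> f x + sum_list (map f xs)" using Cons by auto
  finally show ?case by simp
qed

lemma tree_mdist:
  assumes T: "is_metrized_tree G" and p: "p \<in> verts G" and q: "q \<in> verts G"
  shows "mdist G p q = (\<Sum>d\<in>{d\<in>edges G. \<not> reach G d p q}. len G d)"
proof -
  have wf: "wf_mgraph G" using T tree_wf by auto
  let ?S = "{d\<in>edges G. \<not> reach G d p q}"
  obtain ws where "walk G p ws q" using tree_conn[OF T p q] by blast
  then obtain es where es: "walk G p es q" "distinct es" using walk_trail[OF wf] by blast
  have seteq: "set es = ?S"
  proof
    show "?S \<subseteq> set es" using es unfolding reach_def by auto
    show "set es \<subseteq> ?S"
    proof
      fix d assume d: "d \<in> set es"
      then obtain xs ys where sp: "es = xs @ d # ys" by (meson split_list)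
      then have nd: "d \<notin> set xs" "d \<notin> set ys" using es(2) by auto
      obtain r1 where w1: "walk G p xs r1" and w2: "walk G r1 ([d] @ ys) q"
        using walk_append_elim[OF wf] es(1) sp by fastforce
      obtain r2 where w3: "walk G r1 [d] r2" and w4: "walk G r2 ys q"
        using walk_append_elim[OF wf] w2 by blast
      have de: "d \<in> edges G" using walk_edges[OF es(1)] d by auto
      have e3: "ends G d = (r1, r2) \<or> ends G d = (r2, r1)" using w3 by (auto elim!: walk.cases)
      have "\<not> reach G d p q"
      proof
        assume r: "reach G d p q"
        have "reach G d r1 p" using walk_rev[OF wf w1] nd unfolding reach_def by auto
        moreover have "reach G d q r2" using walk_rev[OF wf w4] nd unfolding reach_def by auto
        ultimately have "reach G d r1 r2" using r reach_trans by metis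
        then show False using e3 tree_bridge[OF T de] reach_sym[OF wf] by metis
      qed
      then show "d \<in> ?S" using de by auto
    qed
  qed
  have lenpos: "\<And>d. d \<in> edges G \<Longrightarrow> len G d > 0" using wf unfolding wf_mgraph_def by auto
  have val: "sum_list (map (len G) es) = sum (len G) ?S"
    using sum_list_distinct_conv_sum_set[OF es(2)] seteq by simp
  have lower: "sum (len G) ?S \<le> sum_list (map (len G) xs)" if w: "walk G p xs q" for xs
  proof -
    have sub: "?S \<subseteq> set xs" using w unfolding reach_def by auto
    have xe: "set xs \<subseteq> edges G" using walk_edges[OF w] .
    have "sum (len G) ?S \<le> sum (len G) (set xs)"
      using sub xe lenpos by (intro sum_mono2) (auto intro: less_imp_le)
    also have "\<dots> \<le> sum_list (map (len G) xs)"
      using xe lenpos by (intro sum_set_le_sum_list) (auto intro: less_imp_le)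
    finally show ?thesis .
  qed
  show ?thesis unfolding mdist_def
  proof (rule cInf_eq_minimum)
    show "sum (len G) ?S \<in> {sum_list (map (len G) es) |es. walk G p es q}"
      using es(1) val[symmetric] by blast
    show "\<And>x. x \<in> {sum_list (map (len G) es) |es. walk G p es q} \<Longrightarrow> sum (len G) ?S \<le> x"
      using lower by blast
  qed
qed

definition cf :: "'a \<Rightarrow> 'a \<Rightarrow> 'a \<Rightarrow> 'a" where
  "cf a b x = (if x = b then a else x)"

lemma contract_fields:
  assumes "ends G e0 = (a0, b0)"
  shows "verts (contract G e0) = cf a0 b0 ` verts G"
    "edges (contract G e0) = edges G - {e0}"
    "ends (contract G e0) = (\<lambda>d. map_prod (cf a0 b0) (cf a0 b0) (ends G d))"
    "len (contract G e0) = len G"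
  using assms unfolding contract_def cf_def by (simp_all add: Let_def)

locale ctr =
  fixes G :: "('a, 'e) mgraph" and e0 a0 b0
  assumes T: "is_metrized_tree G" and e0: "e0 \<in> edges G" and ab: "ends G e0 = (a0, b0)"
begin

abbreviation "G' \<equiv> contract G e0"
abbreviation "f \<equiv> cf a0 b0"

lemma wf: "wf_mgraph G" using T tree_wf by auto
lemma a0V: "a0 \<in> verts G" and b0V: "b0 \<in> verts G" using wf_ends[OF wf e0 ab] by auto
lemma a0b0: "a0 \<noteq> b0" using tree_noloop[OF T e0 ab] .

lemmas F = contract_fields[OF ab]

lemma f_id: "x \<noteq> b0 \<Longrightarrow> f x = x" unfolding cf_def by auto
lemma f_b0: "f b0 = a0" unfolding cf_def by auto

lemma verts': "verts G' = verts G - {b0}"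
proof -
  have "f ` verts G = verts G - {b0}"
  proof
    show "f ` verts G \<subseteq> verts G - {b0}" using a0V a0b0 unfolding cf_def by auto
    show "verts G - {b0} \<subseteq> f ` verts G"
    proof
      fix x assume "x \<in> verts G - {b0}"
      then show "x \<in> f ` verts G" using f_id by (metis DiffD1 DiffD2 image_eqI insertI1)
    qed
  qed
  then show ?thesis using F by simp
qed

lemma fV: "x \<in> verts G \<Longrightarrow> f x \<in> verts G'"
  using F by auto

lemma walk_map: "walk G p es q \<Longrightarrow> walk G' (f p) (filter (\<lambda>d. d \<noteq> e0) es) (f q)"
proof (induction rule: walk.induct)
  case (walk_Nil p) then show ?case using fV by (auto intro: walk.intros)
next
  case (walk_Cons1 d p r es q)
  show ?case
  proof (cases "d = e0")
    case True
    then have "p = a0" "r = b0" using walk_Cons1 ab by auto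
    then have "f p = f r" unfolding cf_def by auto
    then show ?thesis using walk_Cons1 True by simp
  next
    case False
    then show ?thesis using walk_Cons1 F by (auto intro!: walk.walk_Cons1)
  qed
next
  case (walk_Cons2 d r p es q)
  show ?case
  proof (cases "d = e0")
    case True
    then have "r = a0" "p = b0" using walk_Cons2 ab by auto
    then have "f p = f r" unfolding cf_def by auto
    then show ?thesis using walk_Cons2 True by simp
  next
    case False
    then show ?thesis using walk_Cons2 F by (auto intro!: walk.walk_Cons2)
  qed
qed

lemma same_f: "x \<in> verts G \<Longrightarrow> y \<in> verts G \<Longrightarrow> f x = f y \<Longrightarrow> \<exists>ws. walk G x ws y \<and> set ws \<subseteq> {e0}"
proof -
  assume x: "x \<in> verts G" and y: "y \<in> verts G" and h: "f x = f y"
  show ?thesis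
  proof (cases "x = y")
    case True then show ?thesis using x by (auto intro: walk.intros)
  next
    case False
    then have "(x = a0 \<and> y = b0) \<or> (x = b0 \<and> y = a0)" using h unfolding cf_def by (auto split: if_splits)
    then show ?thesis using walk_single[OF wf e0 ab] by auto
  qed
qed

lemma walk_lift: "walk G' p' es q' \<Longrightarrow> p \<in> verts G \<Longrightarrow> q \<in> verts G \<Longrightarrow> f p = p' \<Longrightarrow> f q = q'
   \<Longrightarrow> \<exists>ws. walk G p ws q \<and> set ws \<subseteq> insert e0 (set es)"
proof (induction arbitrary: p rule: walk.induct)
  case (walk_Nil p')
  then have "f p = f q" by simp
  then show ?case using same_f[of p q] walk_Nil by auto
next
  case (walk_Cons1 d p' r' es q')
  obtain x y where xy: "ends G d = (x,y)" by (cases "ends G d")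
  have dE: "d \<in> edges G" "d \<noteq> e0" using walk_Cons1 F by auto
  have xyV: "x \<in> verts G" "y \<in> verts G" using wf_ends[OF wf dE(1) xy] by auto
  have fx: "f x = p'" "f y = r'" using walk_Cons1(2) xy F by auto
  obtain w1 where w1: "walk G p w1 x" "set w1 \<subseteq> {e0}" using same_f[OF walk_Cons1(5) xyV(1)] fx walk_Cons1 by metis
  obtain w2 where w2: "walk G y w2 q" "set w2 \<subseteq> insert e0 (set es)"
    using walk_Cons1.IH[OF xyV(2) walk_Cons1(6) fx(2) walk_Cons1(8)] by blast
  have "walk G x [d] y" using walk_single[OF wf dE(1) xy] by auto
  then have w: "walk G p (w1 @ [d] @ w2) q" using w1 w2 walk_append_intro by metis
  have "set (w1 @ [d] @ w2) \<subseteq> insert e0 (set (d # es))" using w1 w2 by auto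
  then show ?case using w by blast
next
  case (walk_Cons2 d r' p' es q')
  obtain y x where xy: "ends G d = (y,x)" by (cases "ends G d")
  have dE: "d \<in> edges G" "d \<noteq> e0" using walk_Cons2 F by auto
  have xyV: "x \<in> verts G" "y \<in> verts G" using wf_ends[OF wf dE(1) xy] by auto
  have fx: "f x = p'" "f y = r'" using walk_Cons2(2) xy F by auto
  obtain w1 where w1: "walk G p w1 x" "set w1 \<subseteq> {e0}" using same_f[OF walk_Cons2(5) xyV(1)] fx walk_Cons2 by metis
  obtain w2 where w2: "walk G y w2 q" "set w2 \<subseteq> insert e0 (set es)"
    using walk_Cons2.IH[OF xyV(2) walk_Cons2(6) fx(2) walk_Cons2(8)] by blast
  have "walk G x [d] y" using walk_single[OF wf dE(1) xy] by auto
  then have w: "walk G p (w1 @ [d] @ w2) q" using w1 w2 walk_append_intro by metis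
  have "set (w1 @ [d] @ w2) \<subseteq> insert e0 (set (d # es))" using w1 w2 by auto
  then show ?case using w by blast
qed

lemma reach': "e \<noteq> e0 \<Longrightarrow> p \<in> verts G \<Longrightarrow> q \<in> verts G \<Longrightarrow> reach G' e (f p) (f q) \<longleftrightarrow> reach G e p q"
proof
  assume ne: "e \<noteq> e0" and p: "p \<in> verts G" and q: "q \<in> verts G"
  {
    assume "reach G' e (f p) (f q)"
    then obtain ws where "walk G' (f p) ws (f q)" "e \<notin> set ws" unfolding reach_def by auto
    then obtain ws' where "walk G p ws' q" "set ws' \<subseteq> insert e0 (set ws)" using walk_lift p q by blast
    then show "reach G e p q" unfolding reach_def using ne \<open>e \<notin> set ws\<close> by auto
  }
  {
    assume "reach G e p q"
    then obtain ws where "walk G p ws q" "e \<notin> set ws" unfolding reach_def by auto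
    then show "reach G' e (f p) (f q)" unfolding reach_def using walk_map by fastforce
  }
qed

lemma tree': "is_metrized_tree G'"
proof -
  have wf': "wf_mgraph G'"
    unfolding wf_mgraph_def
  proof (intro conjI ballI)
    show "finite (verts G')" "verts G' \<noteq> {}" "finite (edges G')"
      using wf F unfolding wf_mgraph_def by auto
  next
    fix d assume "d \<in> edges G'"
    then have d: "d \<in> edges G" "d \<noteq> e0" using F by auto
    obtain x y where xy: "ends G d = (x,y)" by (cases "ends G d")
    show "fst (ends G' d) \<in> verts G'" "snd (ends G' d) \<in> verts G'"
      using wf_ends[OF wf d(1) xy] fV F xy by auto
    show "len G' d > 0" using wf d F unfolding wf_mgraph_def by auto
  qed
  have conn: "connected_mg G'" unfolding connected_mg_def
  proof (intro ballI)
    fix p' q' assume "p' \<in> verts G'" "q' \<in> verts G'"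
    then obtain p q where pq: "p \<in> verts G" "q \<in> verts G" "p' = f p" "q' = f q" using F by auto
    then obtain es where "walk G p es q" using tree_conn[OF T] by blast
    then show "\<exists>es. walk G' p' es q'" using walk_map pq by blast
  qed
  have ac: "acyclic_mg G'" unfolding acyclic_bridge[OF wf']
  proof
    fix d assume "d \<in> edges G'"
    then have d: "d \<in> edges G" "d \<noteq> e0" using F by auto
    obtain x y where xy: "ends G d = (x,y)" by (cases "ends G d")
    have xyV: "x \<in> verts G" "y \<in> verts G" using wf_ends[OF wf d(1) xy] by auto
    have "\<not> reach G d x y" using tree_bridge[OF T d(1) xy] .
    then have "\<not> reach G' d (f x) (f y)" using reach' d xyV by blast
    then show "\<not> reach G' d (fst (ends G' d)) (snd (ends G' d))" using F xy by simp
  qed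
  show ?thesis unfolding is_metrized_tree_def using wf' conn ac by auto
qed

lemma card': "card (verts G') = card (verts G) - 1"
  using verts' b0V wf unfolding wf_mgraph_def by auto

lemma tl': "total_length G' = total_length G - len G e0"
  using F e0 wf unfolding total_length_def wf_mgraph_def by (simp add: sum_diff1)

lemma mdist': "p \<in> verts G - {b0} \<Longrightarrow> q \<in> verts G - {b0} \<Longrightarrow>
  mdist G' p q = (\<Sum>d\<in>{d\<in>edges G - {e0}. \<not> reach G d p q}. len G d)"
proof -
  assume p: "p \<in> verts G - {b0}" and q: "q \<in> verts G - {b0}"
  have "mdist G' p q = (\<Sum>d\<in>{d\<in>edges G'. \<not> reach G' d p q}. len G' d)"
    using tree_mdist[OF tree'] p q verts' by auto
  also have "{d\<in>edges G'. \<not> reach G' d p q} = {d\<in>edges G - {e0}. \<not> reach G d p q}"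
  proof -
    have "\<And>d. d \<in> edges G - {e0} \<Longrightarrow> reach G' d p q \<longleftrightarrow> reach G d p q"
      using reach'[of _ p q] p q f_id by auto
    then show ?thesis using F by auto
  qed
  finally show ?thesis using F by simp
qed

end

context ctr begin

lemma side': "e \<in> edges G \<Longrightarrow> e \<noteq> e0 \<Longrightarrow> x \<in> verts G \<Longrightarrow> side G' e (f x) = side G e x - {b0}"
proof -
  assume e: "e \<in> edges G" "e \<noteq> e0" and x: "x \<in> verts G"
  show ?thesis
  proof (intro set_eqI iffI)
    fix p assume "p \<in> side G' e (f x)"
    then have p: "p \<in> verts G - {b0}" "reach G' e p (f x)" unfolding side_def using verts' by auto
    then have "reach G' e (f p) (f x)" using f_id by auto
    then have "reach G e p x" using reach' e x p by blast
    then show "p \<in> side G e x - {b0}" using p unfolding side_def by auto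
  next
    fix p assume "p \<in> side G e x - {b0}"
    then have p: "p \<in> verts G - {b0}" "reach G e p x" unfolding side_def by auto
    then have "reach G' e (f p) (f x)" using reach' e x by blast
    then show "p \<in> side G' e (f x)" using p f_id verts' unfolding side_def by auto
  qed
qed

lemma a0b0_side: "e \<in> edges G \<Longrightarrow> e \<noteq> e0 \<Longrightarrow> a0 \<in> side G e x \<longleftrightarrow> b0 \<in> side G e x"
proof -
  assume e: "e \<in> edges G" "e \<noteq> e0"
  have r: "reach G e a0 b0" using reach_edge[OF wf e0 _ ab] e by auto
  have r2: "reach G e b0 a0" using reach_sym[OF wf r] .
  show ?thesis unfolding side_def using a0V b0V reach_trans[OF r2] reach_trans[OF r] by auto
qed

lemma f_side: "e \<in> edges G \<Longrightarrow> e \<noteq> e0 \<Longrightarrow> y \<in> verts G \<Longrightarrow> f y \<in> side G e x - {b0} \<longleftrightarrow> y \<in> side G e x"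
proof (cases "y = b0")
  case True
  assume e: "e \<in> edges G" "e \<noteq> e0"
  then show ?thesis using True f_b0 a0b0 a0b0_side[OF e] by auto
next
  case False then show ?thesis using f_id by auto
qed

end

lemma side_count:
  "is_metrized_tree G \<Longrightarrow> e \<in> edges G \<Longrightarrow> x = fst (ends G e) \<or> x = snd (ends G e) \<Longrightarrow>
   card {d \<in> edges G - {e}. snd (ends G d) \<in> side G e x} + 1 = card (side G e x)"
proof (induction "card (edges G)" arbitrary: G e x rule: less_induct)
  case less
  have T: "is_metrized_tree G" and e: "e \<in> edges G" using less by auto
  have wf: "wf_mgraph G" using T tree_wf by auto
  have xV: "x \<in> verts G" using less.prems(3) wf_ends[OF wf e] by (cases "ends G e") auto
  show ?case
  proof (cases "edges G - {e} = {}")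
    case True
    have "side G e x = {x}"
    proof
      show "{x} \<subseteq> side G e x" using xV reach_refl unfolding side_def by auto
      show "side G e x \<subseteq> {x}"
      proof
        fix p assume "p \<in> side G e x"
        then obtain ws where w: "walk G p ws x" "e \<notin> set ws" unfolding side_def reach_def by auto
        have "set ws \<subseteq> edges G" using walk_edges[OF w(1)] .
        then have "set ws \<subseteq> {e}" using True by blast
        then have "set ws = {}" using w(2) by (auto simp: subset_singleton_iff)
        then have "ws = []" by simp
        then have "walk G p [] x" using w(1) by simp
        then show "p \<in> {x}" by (simp add: walk_Nil_iff)
      qed
    qed
    moreover have emp: "{d \<in> edges G - {e}. snd (ends G d) \<in> side G e x} = {}" using True by blast
    ultimately show ?thesis by (subst emp) simp
  next
    case False
    then obtain e0 where e0: "e0 \<in> edges G" "e0 \<noteq> e" by auto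
    obtain a0 b0 where ab: "ends G e0 = (a0, b0)" by (cases "ends G e0")
    interpret c: ctr G e0 a0 b0 using T e0 ab by unfold_locales auto
    have finE: "finite (edges G)" using wf unfolding wf_mgraph_def by auto
    have lt: "card (edges c.G') < card (edges G)" using c.F finE e0 card_Diff1_less by metis
    have e': "e \<in> edges c.G'" using c.F e e0 by auto
    have x': "c.f x = fst (ends c.G' e) \<or> c.f x = snd (ends c.G' e)"
      using less.prems(3) c.F by (cases "ends G e") auto
    have IH: "card {d \<in> edges c.G' - {e}. snd (ends c.G' d) \<in> side c.G' e (c.f x)} + 1
       = card (side c.G' e (c.f x))"
      using less.hyps[OF lt c.tree' e' x'] by simp
    let ?S = "{d \<in> edges G - {e}. snd (ends G d) \<in> side G e x}"
    have sd: "side c.G' e (c.f x) = side G e x - {b0}" using c.side' e e0 xV by auto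
    have Seq: "{d \<in> edges c.G' - {e}. snd (ends c.G' d) \<in> side c.G' e (c.f x)} = ?S - {e0}"
    proof -
      have "\<And>d. d \<in> edges G \<Longrightarrow> snd (ends c.G' d) \<in> side G e x - {b0} \<longleftrightarrow> snd (ends G d) \<in> side G e x"
      proof -
        fix d assume d: "d \<in> edges G"
        obtain u w where uw: "ends G d = (u,w)" by (cases "ends G d")
        have "w \<in> verts G" using wf_ends[OF wf d uw] by auto
        then show "snd (ends c.G' d) \<in> side G e x - {b0} \<longleftrightarrow> snd (ends G d) \<in> side G e x"
          using c.f_side[OF e] e0 uw c.F by auto
      qed
      then show ?thesis unfolding sd using c.F by auto
    qed
    have finS: "finite ?S" using finE by auto
    have finSide: "finite (side G e x)" using wf unfolding wf_mgraph_def side_def by auto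
    have mem: "e0 \<in> ?S \<longleftrightarrow> b0 \<in> side G e x" using ab e0 by auto
    show ?thesis
    proof (cases "b0 \<in> side G e x")
      case True
      then have "e0 \<in> ?S" using mem by auto
      then have "card ?S > 0" using finS card_gt_0_iff by blast
      then have c1: "card (?S - {e0}) + 1 = card ?S" using \<open>e0 \<in> ?S\<close> by (simp add: card_Diff_singleton)
      have "card (side G e x) > 0" using finSide True card_gt_0_iff by blast
      then have c2: "card (side G e x - {b0}) + 1 = card (side G e x)" using True by (simp add: card_Diff_singleton)
      show ?thesis using IH Seq sd c1 c2 by simp
    next
      case False
      then have "e0 \<notin> ?S" using mem by auto
      then show ?thesis using IH Seq sd False by simp
    qed
  qed
qed

abbreviation "sA G d \<equiv> side G d (fst (ends G d))"
abbreviation "sB G d \<equiv> side G d (snd (ends G d))"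

lemma side_sub: "side G e x \<subseteq> verts G" unfolding side_def by auto

lemma tree_finV: "is_metrized_tree G \<Longrightarrow> finite (verts G)"
  unfolding is_metrized_tree_def wf_mgraph_def by auto
lemma tree_finE: "is_metrized_tree G \<Longrightarrow> finite (edges G)"
  unfolding is_metrized_tree_def wf_mgraph_def by auto

lemma AB:
  assumes T: "is_metrized_tree G" and d: "d \<in> edges G"
  shows "sA G d \<inter> sB G d = {}" "sA G d \<union> sB G d = verts G"
  using side_disj[OF T d, of "fst (ends G d)" "snd (ends G d)"] by auto

lemma cross:
  assumes T: "is_metrized_tree G" and d: "d \<in> edges G" and p: "p \<in> verts G" and q: "q \<in> verts G"
  shows "\<not> reach G d p q \<longleftrightarrow> (p \<in> sA G d \<and> q \<in> sB G d) \<or> (p \<in> sB G d \<and> q \<in> sA G d)"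
  using tree_reach_iff[OF T d, of "fst (ends G d)" "snd (ends G d)" p q] AB[OF T d] p q by auto

lemma ind_sum:
  fixes c :: real
  assumes "finite X"
  shows "(\<Sum>q\<in>X. if q \<in> B then c else 0) = real (card (X \<inter> B)) * c"
proof -
  have "(\<Sum>q\<in>X. if q \<in> B then c else 0) = sum (\<lambda>_. c) {q\<in>X. q \<in> B}"
    using sum.inter_filter[OF assms, of "\<lambda>_. c" "\<lambda>q. q \<in> B"] by simp
  also have "{q\<in>X. q \<in> B} = X \<inter> B" by auto
  finally show ?thesis by simp
qed

lemma pair_one:
  assumes T: "is_metrized_tree G" and d: "d \<in> edges G" and X: "X \<subseteq> verts G"
  shows "(\<Sum>p\<in>X. \<Sum>q\<in>X. if \<not> reach G d p q then (L::real) else 0)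
        = 2 * real (card (sA G d \<inter> X)) * real (card (sB G d \<inter> X)) * L"
proof -
  have finX: "finite X" using tree_finV[OF T] X finite_subset by auto
  have inner: "(\<Sum>q\<in>X. if \<not> reach G d p q then L else 0) =
     (if p \<in> sA G d then real (card (X \<inter> sB G d)) * L else real (card (X \<inter> sA G d)) * L)"
    if p: "p \<in> X" for p
  proof -
    have pV: "p \<in> verts G" using p X by auto
    show ?thesis
    proof (cases "p \<in> sA G d")
      case True
      then have "p \<notin> sB G d" using AB[OF T d] by auto
      then have "\<And>q. q \<in> X \<Longrightarrow> (\<not> reach G d p q) = (q \<in> sB G d)"
        using cross[OF T d pV] X True by auto
      then have "(\<Sum>q\<in>X. if \<not> reach G d p q then L else 0) = (\<Sum>q\<in>X. if q \<in> sB G d then L else 0)"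
        by (intro sum.cong) auto
      then show ?thesis using ind_sum[OF finX] True by simp
    next
      case False
      then have "p \<in> sB G d" using AB[OF T d] pV by auto
      then have "\<And>q. q \<in> X \<Longrightarrow> (\<not> reach G d p q) = (q \<in> sA G d)"
        using cross[OF T d pV] X False by auto
      then have "(\<Sum>q\<in>X. if \<not> reach G d p q then L else 0) = (\<Sum>q\<in>X. if q \<in> sA G d then L else 0)"
        by (intro sum.cong) auto
      then show ?thesis using ind_sum[OF finX] False by simp
    qed
  qed
  have "(\<Sum>p\<in>X. \<Sum>q\<in>X. if \<not> reach G d p q then L else 0) =
        (\<Sum>p\<in>X. if p \<in> sA G d then real (card (X \<inter> sB G d)) * L else real (card (X \<inter> sA G d)) * L)"
    using inner by (intro sum.cong) auto
  also have "\<dots> = real (card (X \<inter> sA G d)) * (real (card (X \<inter> sB G d)) * L)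
      + real (card (X - sA G d)) * (real (card (X \<inter> sA G d)) * L)"
  proof -
    have e1: "X \<inter> {x. x \<in> sA G d} = X \<inter> sA G d" "X \<inter> - {x. x \<in> sA G d} = X - sA G d" by auto
    show ?thesis using sum.If_cases[OF finX, of "\<lambda>p. p \<in> sA G d" "\<lambda>_. real (card (X \<inter> sB G d)) * L" "\<lambda>_. real (card (X \<inter> sA G d)) * L"] unfolding e1 by simp
  qed
  also have "X - sA G d = X \<inter> sB G d" using AB[OF T d] X by auto
  finally show ?thesis by (simp add: Int_commute algebra_simps)
qed

lemma pair_count:
  assumes T: "is_metrized_tree G" and X: "X \<subseteq> verts G" and F: "F \<subseteq> edges G"
  shows "(\<Sum>p\<in>X. \<Sum>q\<in>X. \<Sum>d\<in>{d\<in>F. \<not> reach G d p q}. len G d)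
       = (\<Sum>d\<in>F. 2 * real (card (sA G d \<inter> X)) * real (card (sB G d \<inter> X)) * len G d)"
proof -
  have finF: "finite F" using tree_finE[OF T] F finite_subset by auto
  have "(\<Sum>p\<in>X. \<Sum>q\<in>X. \<Sum>d\<in>{d\<in>F. \<not> reach G d p q}. len G d)
      = (\<Sum>p\<in>X. \<Sum>q\<in>X. \<Sum>d\<in>F. if \<not> reach G d p q then len G d else 0)"
    by (rule sum.cong[OF refl], rule sum.cong[OF refl], rule sum.inter_filter[OF finF])
  also have "\<dots> = (\<Sum>p\<in>X. \<Sum>d\<in>F. \<Sum>q\<in>X. if \<not> reach G d p q then len G d else 0)"
    by (intro sum.cong refl sum.swap)
  also have "\<dots> = (\<Sum>d\<in>F. \<Sum>p\<in>X. \<Sum>q\<in>X. if \<not> reach G d p q then len G d else 0)"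
    by (rule sum.swap)
  also have "\<dots> = (\<Sum>d\<in>F. 2 * real (card (sA G d \<inter> X)) * real (card (sB G d \<inter> X)) * len G d)"
    using pair_one[OF T _ X] F by (intro sum.cong) auto
  finally show ?thesis .
qed

lemma wiener_tree:
  assumes T: "is_metrized_tree G"
  shows "wiener G = (\<Sum>d\<in>edges G. real (card (sA G d)) * real (card (sB G d)) * len G d)"
proof -
  have "wiener G = 1/2 * (\<Sum>p\<in>verts G. \<Sum>q\<in>verts G. \<Sum>d\<in>{d\<in>edges G. \<not> reach G d p q}. len G d)"
    unfolding wiener_def by (intro arg_cong[where f="\<lambda>x. 1/2 * x"] sum.cong refl tree_mdist[OF T])
  also have "\<dots> = 1/2 * (\<Sum>d\<in>edges G. 2 * real (card (sA G d \<inter> verts G)) * real (card (sB G d \<inter> verts G)) * len G d)"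
    using pair_count[OF T order_refl order_refl] by simp
  also have "\<dots> = (\<Sum>d\<in>edges G. real (card (sA G d)) * real (card (sB G d)) * len G d)"
  proof -
    have "sA G d \<inter> verts G = sA G d" "sB G d \<inter> verts G = sB G d" for d
      using side_sub[of G d "fst (ends G d)"] side_sub[of G d "snd (ends G d)"] by blast+
    then show ?thesis by (simp add: sum_distrib_left mult.assoc)
  qed
  finally show ?thesis .
qed

lemma wiener_contract:
  assumes T: "is_metrized_tree G" and e0: "e0 \<in> edges G"
  shows "wiener (contract G e0) = (\<Sum>d\<in>edges G - {e0}.
     real (card (sA G d - {snd (ends G e0)})) * real (card (sB G d - {snd (ends G e0)})) * len G d)"
proof -
  obtain a0 b0 where ab: "ends G e0 = (a0,b0)" by (cases "ends G e0")
  interpret c: ctr G e0 a0 b0 using T e0 ab by unfold_locales auto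
  have "wiener c.G' = 1/2 * (\<Sum>p\<in>verts G - {b0}. \<Sum>q\<in>verts G - {b0}. \<Sum>d\<in>{d\<in>edges G - {e0}. \<not> reach G d p q}. len G d)"
    unfolding wiener_def c.verts' by (intro arg_cong[where f="\<lambda>x. 1/2 * x"] sum.cong refl c.mdist')
  also have "\<dots> = 1/2 * (\<Sum>d\<in>edges G - {e0}. 2 * real (card (sA G d \<inter> (verts G - {b0}))) * real (card (sB G d \<inter> (verts G - {b0}))) * len G d)"
    using pair_count[OF T, of "verts G - {b0}" "edges G - {e0}"] by simp
  also have "\<dots> = (\<Sum>d\<in>edges G - {e0}. real (card (sA G d - {b0})) * real (card (sB G d - {b0})) * len G d)"
  proof -
    have "sA G d \<inter> (verts G - {b0}) = sA G d - {b0}" "sB G d \<inter> (verts G - {b0}) = sB G d - {b0}" for d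
      using side_sub[of G d "fst (ends G d)"] side_sub[of G d "snd (ends G d)"] by blast+
    then show ?thesis by (simp add: sum_distrib_left mult.assoc)
  qed
  finally show ?thesis using ab by simp
qed

lemma real_card_minus1: "finite A \<Longrightarrow> y \<in> A \<Longrightarrow> real (card (A - {y})) = real (card A) - 1"
proof -
  assume "finite A" "y \<in> A"
  then have "card A \<ge> 1" using card_gt_0_iff by (metis One_nat_def Suc_leI empty_iff)
  then show ?thesis using \<open>y \<in> A\<close> by (simp add: card_Diff_singleton of_nat_diff)
qed

lemma side_fin: "is_metrized_tree G \<Longrightarrow> finite (side G e x)"
  using tree_finV side_sub finite_subset by metis

lemma inner_count:
  assumes T: "is_metrized_tree G" and d: "d \<in> edges G"
  shows "(\<Sum>e0\<in>edges G - {d}. real (card (sA G d - {snd (ends G e0)})) * real (card (sB G d - {snd (ends G e0)})))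
     = (real (card (sA G d)) - 1)^2 * real (card (sB G d)) + real (card (sA G d)) * (real (card (sB G d)) - 1)^2"
proof -
  let ?A = "sA G d" and ?B = "sB G d"
  let ?a = "real (card ?A)" and ?b = "real (card ?B)"
  have wf: "wf_mgraph G" using T tree_wf by auto
  have finE: "finite (edges G)" using tree_finE[OF T] .
  have yV: "snd (ends G e0) \<in> verts G" if "e0 \<in> edges G" for e0
    using wf_ends[OF wf that, of "fst (ends G e0)" "snd (ends G e0)"] by simp
  have trm: "real (card (?A - {snd (ends G e0)})) * real (card (?B - {snd (ends G e0)}))
     = (if snd (ends G e0) \<in> ?A then (?a - 1) * ?b else ?a * (?b - 1))" if e0: "e0 \<in> edges G - {d}" for e0
  proof -
    let ?y = "snd (ends G e0)"
    have y: "?y \<in> verts G" using yV e0 by auto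
    show ?thesis
    proof (cases "?y \<in> ?A")
      case True
      then have "?y \<notin> ?B" using AB[OF T d] by auto
      then show ?thesis using True real_card_minus1[OF side_fin[OF T] True] by simp
    next
      case False
      then have yB: "?y \<in> ?B" using AB[OF T d] y by auto
      then show ?thesis using False real_card_minus1[OF side_fin[OF T] yB] by simp
    qed
  qed
  let ?SA = "{e0 \<in> edges G - {d}. snd (ends G e0) \<in> ?A}"
  let ?SB = "{e0 \<in> edges G - {d}. snd (ends G e0) \<in> ?B}"
  have cA: "card ?SA + 1 = card ?A" using side_count[OF T d] by simp
  have cB: "card ?SB + 1 = card ?B" using side_count[OF T d] by simp
  have e1: "(edges G - {d}) \<inter> {x. snd (ends G x) \<in> ?A} = ?SA" by auto
  have e2: "(edges G - {d}) \<inter> - {x. snd (ends G x) \<in> ?A} = ?SB"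
    using AB[OF T d] yV by auto
  have "(\<Sum>e0\<in>edges G - {d}. real (card (?A - {snd (ends G e0)})) * real (card (?B - {snd (ends G e0)})))
      = (\<Sum>e0\<in>edges G - {d}. if snd (ends G e0) \<in> ?A then (?a - 1) * ?b else ?a * (?b - 1))"
    using trm by (intro sum.cong) auto
  also have "\<dots> = real (card ?SA) * ((?a - 1) * ?b) + real (card ?SB) * (?a * (?b - 1))"
    using sum.If_cases[of "edges G - {d}" "\<lambda>x. snd (ends G x) \<in> ?A" "\<lambda>_. (?a - 1) * ?b" "\<lambda>_. ?a * (?b - 1)"] finE
    unfolding e1 e2 by simp
  also have "real (card ?SA) = ?a - 1"
  proof -
    have "real (card ?SA + 1) = ?a" using cA by (simp only:)
    then show ?thesis by simp
  qed
  also have "real (card ?SB) = ?b - 1"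
  proof -
    have "real (card ?SB + 1) = ?b" using cB by (simp only:)
    then show ?thesis by simp
  qed
  finally show ?thesis by (simp add: power2_eq_square algebra_simps)
qed

lemma card_AB: assumes T: "is_metrized_tree G" and d: "d \<in> edges G"
  shows "card (sA G d) + card (sB G d) = card (verts G)"
proof -
  have "card (sA G d \<union> sB G d) = card (sA G d) + card (sB G d)"
    by (rule card_Un_disjoint) (use side_fin[OF T] AB[OF T d] in auto)
  then show ?thesis using AB[OF T d] by simp
qed

lemma edge_count:
  assumes T: "is_metrized_tree G" and ne: "edges G \<noteq> {}"
  shows "card (edges G) + 1 = card (verts G)"
proof -
  obtain d where d: "d \<in> edges G" using ne by auto
  have wf: "wf_mgraph G" using T tree_wf by auto
  have finE: "finite (edges G)" using tree_finE[OF T] .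
  let ?A = "sA G d" and ?B = "sB G d"
  let ?SA = "{e0 \<in> edges G - {d}. snd (ends G e0) \<in> ?A}"
  let ?SB = "{e0 \<in> edges G - {d}. snd (ends G e0) \<in> ?B}"
  have cA: "card ?SA + 1 = card ?A" using side_count[OF T d] by simp
  have cB: "card ?SB + 1 = card ?B" using side_count[OF T d] by simp
  have yV: "snd (ends G e0) \<in> verts G" if "e0 \<in> edges G" for e0
    using wf_ends[OF wf that, of "fst (ends G e0)" "snd (ends G e0)"] by simp
  have un: "edges G - {d} = ?SA \<union> ?SB"
  proof (intro equalityI subsetI)
    fix e0 assume e0: "e0 \<in> edges G - {d}"
    then have "snd (ends G e0) \<in> verts G" using yV by simp
    then have "snd (ends G e0) \<in> ?A \<union> ?B" by (simp only: AB(2)[OF T d])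
    then show "e0 \<in> ?SA \<union> ?SB" using e0 by simp
  next
    fix e0 assume "e0 \<in> ?SA \<union> ?SB" then show "e0 \<in> edges G - {d}" by (elim UnE CollectE conjE) assumption+
  qed
  have dj: "?SA \<inter> ?SB = {}"
  proof -
    have "x \<notin> ?B" if "x \<in> ?A" for x using AB(1)[OF T d] that by (simp add: disjoint_iff)
    then show ?thesis by auto
  qed
  have fA: "finite ?SA" "finite ?SB" using finE by auto
  have c1: "card (edges G - {d}) = card ?SA + card ?SB"
    using arg_cong[where f=card, OF un] card_Un_disjoint[OF fA dj] by (rule trans)
  have c2: "card (edges G - {d}) + 1 = card (edges G)"
  proof -
    have "card (edges G) > 0" using finE d card_gt_0_iff by blast
    then show ?thesis by (simp add: card_Diff_singleton[OF d])
  qed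
  have c3: "card ?A + card ?B = card (verts G)" using card_AB[OF T d] .
  show ?thesis using c1 c2 c3 cA cB by linarith
qed

lemma sum_swap_diff:
  fixes h :: "'a \<Rightarrow> 'a \<Rightarrow> real"
  assumes "finite E"
  shows "(\<Sum>a\<in>E. \<Sum>b\<in>E - {a}. h a b) = (\<Sum>b\<in>E. \<Sum>a\<in>E - {b}. h a b)"
proof -
  have "(\<Sum>a\<in>E. \<Sum>b\<in>E - {a}. h a b) = (\<Sum>a\<in>E. (\<Sum>b\<in>E. h a b) - h a a)"
    using assms by (intro sum.cong) (auto simp: sum_diff1)
  also have "\<dots> = (\<Sum>a\<in>E. \<Sum>b\<in>E. h a b) - (\<Sum>a\<in>E. h a a)" by (simp add: sum_subtractf)
  also have "(\<Sum>a\<in>E. \<Sum>b\<in>E. h a b) = (\<Sum>b\<in>E. \<Sum>a\<in>E. h a b)" by (rule sum.swap)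
  also have "(\<Sum>b\<in>E. \<Sum>a\<in>E. h a b) - (\<Sum>a\<in>E. h a a) = (\<Sum>b\<in>E. (\<Sum>a\<in>E. h a b) - h b b)"
    by (simp add: sum_subtractf)
  also have "\<dots> = (\<Sum>b\<in>E. \<Sum>a\<in>E - {b}. h a b)"
    using assms by (intro sum.cong) (auto simp: sum_diff1)
  finally show ?thesis .
qed

lemma card_AB_real: "is_metrized_tree G \<Longrightarrow> d \<in> edges G \<Longrightarrow>
  real (card (sA G d)) + real (card (sB G d)) = real (card (verts G))"
  using card_AB[of G d] of_nat_add by metis

lemma alg2:
  fixes a b v L :: real
  assumes "a + b = v"
  shows "((a - 1)^2 * b + a * (b - 1)^2) * L = (v - 4) * (a * b * L) + v * L"
  unfolding assms[symmetric] by (simp add: power2_eq_square algebra_simps)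

lemma S1:
  assumes T: "is_metrized_tree G"
  shows "(\<Sum>e0\<in>edges G. wiener (contract G e0))
     = (real (card (verts G)) - 4) * wiener G + real (card (verts G)) * total_length G"
proof -
  let ?v = "real (card (verts G))"
  have finE: "finite (edges G)" using tree_finE[OF T] .
  let ?c = "\<lambda>d e0. real (card (sA G d - {snd (ends G e0)})) * real (card (sB G d - {snd (ends G e0)})) * len G d"
  have "(\<Sum>e0\<in>edges G. wiener (contract G e0)) = (\<Sum>e0\<in>edges G. \<Sum>d\<in>edges G - {e0}. ?c d e0)"
    by (rule sum.cong[OF refl], rule wiener_contract[OF T])
  also have "\<dots> = (\<Sum>d\<in>edges G. \<Sum>e0\<in>edges G - {d}. ?c d e0)"
    by (rule sum_swap_diff[OF finE])
  also have "\<dots> = (\<Sum>d\<in>edges G. ((real (card (sA G d)) - 1)^2 * real (card (sB G d)) + real (card (sA G d)) * (real (card (sB G d)) - 1)^2) * len G d)"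
  proof (intro sum.cong refl)
    fix d assume d: "d \<in> edges G"
    have "(\<Sum>e0\<in>edges G - {d}. ?c d e0) = (\<Sum>e0\<in>edges G - {d}. real (card (sA G d - {snd (ends G e0)})) * real (card (sB G d - {snd (ends G e0)}))) * len G d"
      by (simp only: sum_distrib_right)
    then show "(\<Sum>e0\<in>edges G - {d}. ?c d e0) = ((real (card (sA G d)) - 1)^2 * real (card (sB G d)) + real (card (sA G d)) * (real (card (sB G d)) - 1)^2) * len G d"
      using inner_count[OF T d] by (simp only:)
  qed
  also have "\<dots> = (\<Sum>d\<in>edges G. (?v - 4) * (real (card (sA G d)) * real (card (sB G d)) * len G d) + ?v * len G d)"
    by (rule sum.cong[OF refl], rule alg2, rule card_AB_real[OF T])
  also have "\<dots> = (?v - 4) * wiener G + ?v * total_length G"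
    unfolding wiener_tree[OF T] total_length_def by (simp only: sum.distrib sum_distrib_left)
  finally show ?thesis .
qed

fun afun :: "nat \<Rightarrow> nat \<Rightarrow> real" where
  "afun n 0 = 1"
| "afun n (Suc k) = (real n - 4) * afun (n - 1) k"

fun bfun :: "nat \<Rightarrow> nat \<Rightarrow> real" where
  "bfun n 0 = 0"
| "bfun n (Suc k) = real n * afun (n - 1) k + (real n - 2) * bfun (n - 1) k"

lemma tl_count:
  assumes T: "is_metrized_tree G"
  shows "(\<Sum>e0\<in>edges G. total_length G - len G e0) = (real (card (verts G)) - 2) * total_length G"
proof (cases "edges G = {}")
  case True then show ?thesis by (simp add: total_length_def)
next
  case False
  have h: "real (card (verts G)) = real (card (edges G)) + 1" 
  proof -
    have "real (card (edges G) + 1) = real (card (verts G))" using edge_count[OF T False] by (simp only:)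
    then show ?thesis by simp
  qed
  show ?thesis unfolding h by (simp add: sum_subtractf total_length_def algebra_simps)
qed

lemma iter_formula:
  "is_metrized_tree G \<Longrightarrow> iter_wiener_sum k G = afun (card (verts G)) k * wiener G + bfun (card (verts G)) k * total_length G"
proof (induction k arbitrary: G)
  case 0 then show ?case by simp
next
  case (Suc k)
  have T: "is_metrized_tree G" by fact
  let ?n = "card (verts G)"
  have step: "iter_wiener_sum k (contract G e0) = afun (?n - 1) k * wiener (contract G e0) + bfun (?n - 1) k * (total_length G - len G e0)"
    if e0: "e0 \<in> edges G" for e0
  proof -
    obtain a0 b0 where ab: "ends G e0 = (a0,b0)" by (cases "ends G e0")
    interpret c: ctr G e0 a0 b0 using T e0 ab by unfold_locales auto
    show ?thesis using Suc.IH[OF c.tree'] c.card' c.tl' by simp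
  qed
  have "iter_wiener_sum (Suc k) G = (\<Sum>e0\<in>edges G. afun (?n - 1) k * wiener (contract G e0) + bfun (?n - 1) k * (total_length G - len G e0))"
    using step by simp
  also have "\<dots> = afun (?n - 1) k * (\<Sum>e0\<in>edges G. wiener (contract G e0)) + bfun (?n - 1) k * (\<Sum>e0\<in>edges G. total_length G - len G e0)"
    by (simp add: sum.distrib sum_distrib_left)
  also have "\<dots> = afun (?n - 1) k * ((real ?n - 4) * wiener G + real ?n * total_length G) + bfun (?n - 1) k * ((real ?n - 2) * total_length G)"
    using S1[OF T] tl_count[OF T] by simp
  also have "\<dots> = afun ?n (Suc k) * wiener G + bfun ?n (Suc k) * total_length G"
    by (simp add: algebra_simps)
  finally show ?case .
qed

lemma afun_fact: "k + 4 \<le> n \<Longrightarrow> afun n k * real (fact (n - 4 - k)) = real (fact (n - 4))"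
proof (induction k arbitrary: n)
  case 0 then show ?case by simp
next
  case (Suc k)
  have "k + 4 \<le> n - 1" using Suc.prems by simp
  note IH = Suc.IH[OF this]
  have e1: "n - 4 - Suc k = n - 1 - 4 - k" by simp
  have e2: "n - 4 = Suc (n - 1 - 4)" using Suc.prems by simp
  have e3: "real n - 4 = real (Suc (n - 1 - 4))" using Suc.prems by simp
  have "afun n (Suc k) * real (fact (n - 4 - Suc k)) = (real n - 4) * (afun (n-1) k * real (fact (n - 1 - 4 - k)))"
    unfolding afun.simps e1 by (simp only: mult.assoc)
  also have "\<dots> = (real n - 4) * real (fact (n - 1 - 4))" by (simp only: IH)
  also have "\<dots> = real (fact (n - 4))" unfolding e3 by (subst e2) (simp only: fact_Suc of_nat_mult of_nat_id)
  finally show ?case .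
qed

lemma polyid:
  fixes x y :: real
  shows "x * ((x - y - 3) * (x - y - 4)) + (x - 2) * (((x - 1)^2 - (y + 2) * (x - 1) + y - 1) * y)
    = (x - 4) * ((x^2 - ((y + 1) + 2) * x + (y + 1) - 1) * (y + 1))"
  by (simp add: power2_eq_square algebra_simps)

lemma bfun_closed: "k + 4 \<le> n \<Longrightarrow> bfun n k * ((real n - real k - 2) * (real n - real k - 3))
   = afun n k * (((real n)^2 - (real k + 2) * real n + real k - 1) * real k)"
proof (induction k arbitrary: n)
  case 0 then show ?case by simp
next
  case (Suc k)
  have IH: "bfun (n - 1) k * ((real (n - 1) - real k - 2) * (real (n - 1) - real k - 3))
     = afun (n - 1) k * (((real (n - 1))^2 - (real k + 2) * real (n - 1) + real k - 1) * real k)"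
    using Suc.IH[of "n - 1"] Suc.prems by simp
  have m: "real (n - 1) = real n - 1" using Suc.prems by simp
  let ?a = "afun (n - 1) k" and ?b = "bfun (n - 1) k"
  have IH': "?b * ((real n - real k - 3) * (real n - real k - 4))
     = ?a * (((real n - 1)^2 - (real k + 2) * (real n - 1) + real k - 1) * real k)"
    using IH unfolding m by (simp add: algebra_simps)
  have "bfun n (Suc k) * ((real n - real (Suc k) - 2) * (real n - real (Suc k) - 3))
     = real n * ?a * ((real n - real k - 3) * (real n - real k - 4))
       + (real n - 2) * (?b * ((real n - real k - 3) * (real n - real k - 4)))"
    by (simp add: algebra_simps)
  also have "\<dots> = ?a * (real n * ((real n - real k - 3) * (real n - real k - 4))
       + (real n - 2) * (((real n - 1)^2 - (real k + 2) * (real n - 1) + real k - 1) * real k))"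
    unfolding IH' by (simp add: algebra_simps)
  also have "\<dots> = ?a * ((real n - 4) * (((real n)^2 - (real (Suc k) + 2) * real n + real (Suc k) - 1) * real (Suc k)))"
    using polyid[of "real n" "real k"] by simp
  also have "\<dots> = afun n (Suc k) * (((real n)^2 - (real (Suc k) + 2) * real n + real (Suc k) - 1) * real (Suc k))"
    by simp
  finally show ?case .
qed

lemma alg:
  fixes r a b P D w l :: real
  assumes "D \<noteq> 0" "r * a = 1" "b * D = a * P"
  shows "w = r * (a * w + b * l) - P / D * l"
proof -
  have "r * b * D = P" using assms(2,3) by (metis mult.assoc mult_1 )
  then have rb: "r * b = P / D" using assms(1) by (simp add: field_simps)
  have "r * (a * w + b * l) = (r * a) * w + (r * b) * l" by (simp add: algebra_simps)
  then show ?thesis using rb assms(2) by simp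
qed

lemma main:
  assumes T: "is_metrized_tree G" and v: "v = card (verts G)" and kv: "k + 4 \<le> v"
  shows "wiener G =
           real (fact (v - 4 - k)) / real (fact (v - 4)) * iter_wiener_sum k G
           - ((real v)^2 - (real k + 2) * real v + real k - 1) * real k
               / ((real v - real k - 2) * (real v - real k - 3)) * total_length G"
proof -
  have it: "iter_wiener_sum k G = afun v k * wiener G + bfun v k * total_length G" using iter_formula[OF T] v by simp
  have fa: "afun v k * real (fact (v - 4 - k)) = real (fact (v - 4))" using afun_fact[OF kv] .
  have fnz: "real (fact (v - 4)) \<noteq> (0::real)" by simp
  have ra: "real (fact (v - 4 - k)) / real (fact (v - 4)) * afun v k = 1"
    using fa fnz by (simp add: field_simps)
  have Dnz: "(real v - real k - 2) * (real v - real k - 3) \<noteq> 0" using kv by auto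
  show ?thesis unfolding it by (rule alg[OF Dnz ra bfun_closed[OF kv]])
qed

theorem theorem4p4:
  fixes G :: "('a, 'e) mgraph" and v k :: nat
  assumes "is_metrized_tree G"
    and "v = card (verts G)"
    and "v \<ge> 5"
    and "1 \<le> k" and "k \<le> v - 4"
  shows "wiener G =
           real (fact (v - 4 - k)) / real (fact (v - 4)) * iter_wiener_sum k G
           - ((real v)^2 - (real k + 2) * real v + real k - 1) * real k
               / ((real v - real k - 2) * (real v - real k - 3)) * total_length G
      \<and> wiener G =
           1 / real (fact (v - 4)) * iter_wiener_sum (v - 4) G
           - (3 * real v - 5) * (real v - 4) / 2 * total_length G"
proof
  show "wiener G =
           real (fact (v - 4 - k)) / real (fact (v - 4)) * iter_wiener_sum k G
           - ((real v)^2 - (real k + 2) * real v + real k - 1) * real k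
               / ((real v - real k - 2) * (real v - real k - 3)) * total_length G"
    using main[OF assms(1,2)] assms(3,5) by simp
  have m: "wiener G =
           real (fact (v - 4 - (v - 4))) / real (fact (v - 4)) * iter_wiener_sum (v - 4) G
           - ((real v)^2 - (real (v - 4) + 2) * real v + real (v - 4) - 1) * real (v - 4)
               / ((real v - real (v - 4) - 2) * (real v - real (v - 4) - 3)) * total_length G"
    using main[OF assms(1,2), of "v - 4"] assms(3) by simp
  have r: "real (v - 4) = real v - 4" using assms(3) by simp
  have c: "((real v)^2 - (real (v - 4) + 2) * real v + real (v - 4) - 1) * real (v - 4)
               / ((real v - real (v - 4) - 2) * (real v - real (v - 4) - 3)) = (3 * real v - 5) * (real v - 4) / 2"
    unfolding r by (simp add: power2_eq_square algebra_simps)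
  show "wiener G =
           1 / real (fact (v - 4)) * iter_wiener_sum (v - 4) G
           - (3 * real v - 5) * (real v - 4) / 2 * total_length G"
    using m unfolding c by simp
qed

end
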